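(* Consider the following chemical reaction network (the ERK cascade without feedback in which MEK and ERK share the same phosphatase PH) with 21 species RAF, pRAF, MEK, pMEK, ppMEK, ERK, pERK, ppERK, RAS, RAFPH, PH, RAS-RAF, MEK-pRAF, pMEK-pRAF, ERK-ppMEK, pERK-ppMEK, RAF-RAFPH, ppMEK-PH, pMEK-PH, ppERK-PH, pERK-PH and 30 reactions with rate constants $k_1,\dots,k_{30}$: RAF + RAS $\underset{k_2}{\overset{k_1}{\rightleftarrows}}$ RAS-RAF $\overset{k_3}{\to}$ pRAF + RAS; pRAF + RAFPH $\underset{k_5}{\overset{k_4}{\rightleftarrows}}$ RAF-RAFPH $\overset{k_6}{\to}$ RAF + RAFPH; MEK + pRAF $\underset{k_8}{\overset{k_7}{\rightleftarrows}}$ MEK-pRAF $\overset{k_9}{\to}$ pMEK + pRAF $\underset{k_{11}}{\overset{k_{10}}{\rightleftarrows}}$ pMEK-pRAF $\overset{k_{12}}{\to}$ ppMEK + pRAF; ppMEK + PH $\underset{k_{14}}{\overset{k_{13}}{\rightleftarrows}}$ ppMEK-PH $\overset{k_{15}}{\to}$ pMEK + PH $\underset{k_{17}}{\overset{k_{16}}{\rightleftarrows}}$ pMEK-PH $\overset{k_{18}}{\to}$ MEK + PH; ERK + ppMEK $\underset{k_{20}}{\overset{k_{19}}{\rightleftarrows}}$ ERK-ppMEK $\overset{k_{21}}{\to}$ pERK + ppMEK $\underset{k_{23}}{\overset{k_{22}}{\rightleftarrows}}$ pERK-ppMEK $\overset{k_{24}}{\to}$ ppERK + ppMEK; ppERK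 + PH $\underset{k_{26}}{\overset{k_{25}}{\rightleftarrows}}$ ppERK-PH $\overset{k_{27}}{\to}$ pERK + PH $\underset{k_{29}}{\overset{k_{28}}{\rightleftarrows}}$ pERK-PH $\overset{k_{30}}{\to}$ ERK + PH. Then for every choice of positive rate constants $k\in\mathbb{R}^{30}_{>0}$, the associated mass-action system has toric steady states; in particular its steady state ideal is a binomial ideal.
   Context: For a reaction network with species concentrations $x=(x_1,\dots,x_s)$ and reactions $y\to y'$ (complexes $y,y'\in\mathbb{Z}_{\ge0}^s$, where a complex is a formal sum of species) with positive rate constants, the mass-action system is $\dot x = f(x;k)=\sum_{\text{reactions } y\to y'} k_{y\to y'}\, x^{y}(y'-y)$, whose components $f_1,\dots,f_s$ are polynomials in $x$. The steady state ideal is $J=\langle f_1,\dots,f_s\rangle\subseteq\mathbb{R}[x_1,\dots,x_s]$. The system has toric steady states if $J$ can be generated by binomials (polynomials with at most two terms) and $J$ admits nonnegative zeros. *)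

theory Defs
  imports Complex_Main "HOL-Library.Poly_Mapping"
begin

(* Multivariate real polynomials: finitely supported maps from monomials
   (exponent vectors nat \<Rightarrow>\<^sub>0 nat, variable x_i has index i) to real coefficients. *)
type_synonym mpoly = "(nat \<Rightarrow>\<^sub>0 nat) \<Rightarrow>\<^sub>0 real"

definition nspec :: nat where "nspec = 21"

definition in_ring :: "mpoly \<Rightarrow> bool" where
  "in_ring p \<longleftrightarrow> (\<forall>m \<in> Poly_Mapping.keys p. Poly_Mapping.keys m \<subseteq> {..<nspec})"

definition ideal_gen :: "mpoly set \<Rightarrow> mpoly set" where
  "ideal_gen F = {p. \<exists>fs gs. set fs \<subseteq> F \<and> length gs = length fs \<and>
      (\<forall>g \<in> set gs. in_ring g) \<and> p = sum_list (map2 (*) gs fs)}"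

definition binomial :: "mpoly \<Rightarrow> bool" where
  "binomial p \<longleftrightarrow> card (Poly_Mapping.keys p) \<le> 2"

definition eval :: "mpoly \<Rightarrow> (nat \<Rightarrow> real) \<Rightarrow> real" where
  "eval p x = (\<Sum>m \<in> Poly_Mapping.keys p. Poly_Mapping.lookup p m * (\<Prod>i \<in> Poly_Mapping.keys m. x i ^ Poly_Mapping.lookup m i))"

(* complex given as a list of species (with multiplicity) *)
definition cplx :: "nat list \<Rightarrow> (nat \<Rightarrow>\<^sub>0 nat)" where
  "cplx l = sum_list (map (\<lambda>i. Poly_Mapping.single i 1) l)"

(* mass-action species formation rate of species i, for a list of reactions
   (source, target) and rate constants k, reaction number r having rate constant k r *)
definition mass_action :: "((nat \<Rightarrow>\<^sub>0 nat) \<times> (nat \<Rightarrow>\<^sub>0 nat)) list \<Rightarrow> (nat \<Rightarrow> real) \<Rightarrow> nat \<Rightarrow> mpoly" where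
  "mass_action R k i = (\<Sum>r < length R.
     Poly_Mapping.single (fst (R ! r))
       (k r * (real (Poly_Mapping.lookup (snd (R ! r)) i) - real (Poly_Mapping.lookup (fst (R ! r)) i))))"

definition steady_state_ideal :: "((nat \<Rightarrow>\<^sub>0 nat) \<times> (nat \<Rightarrow>\<^sub>0 nat)) list \<Rightarrow> (nat \<Rightarrow> real) \<Rightarrow> mpoly set" where
  "steady_state_ideal R k = ideal_gen {mass_action R k i | i. i < nspec}"

definition has_toric_steady_states :: "((nat \<Rightarrow>\<^sub>0 nat) \<times> (nat \<Rightarrow>\<^sub>0 nat)) list \<Rightarrow> (nat \<Rightarrow> real) \<Rightarrow> bool" where
  "has_toric_steady_states R k \<longleftrightarrow>
     (\<exists>B. (\<forall>b \<in> B. in_ring b \<and> binomial b) \<and> ideal_gen B = steady_state_ideal R k) \<and>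
     (\<exists>x. (\<forall>i < nspec. 0 \<le> x i) \<and> (\<forall>p \<in> steady_state_ideal R k. eval p x = 0))"

(* Species indices:
   0 RAF, 1 pRAF, 2 MEK, 3 pMEK, 4 ppMEK, 5 ERK, 6 pERK, 7 ppERK, 8 RAS, 9 RAFPH, 10 PH,
   11 RAS-RAF, 12 MEK-pRAF, 13 pMEK-pRAF, 14 ERK-ppMEK, 15 pERK-ppMEK, 16 RAF-RAFPH,
   17 ppMEK-PH, 18 pMEK-PH, 19 ppERK-PH, 20 pERK-PH.
   Reaction number r (0-based) has rate constant k_{r+1} of the paper. *)
definition ERK_network :: "((nat \<Rightarrow>\<^sub>0 nat) \<times> (nat \<Rightarrow>\<^sub>0 nat)) list" where
  "ERK_network = map (\<lambda>(a, b). (cplx a, cplx b))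
    [ ([0,8],[11]), ([11],[0,8]), ([11],[1,8]),
      ([1,9],[16]), ([16],[1,9]), ([16],[0,9]),
      ([2,1],[12]), ([12],[2,1]), ([12],[3,1]),
      ([3,1],[13]), ([13],[3,1]), ([13],[4,1]),
      ([4,10],[17]), ([17],[4,10]), ([17],[3,10]),
      ([3,10],[18]), ([18],[3,10]), ([18],[2,10]),
      ([5,4],[14]), ([14],[5,4]), ([14],[6,4]),
      ([6,4],[15]), ([15],[6,4]), ([15],[7,4]),
      ([7,10],[19]), ([19],[7,10]), ([19],[6,10]),
      ([6,10],[20]), ([20],[6,10]), ([20],[5,10]) ]"

end

theory Submission
  imports Defs
begin

definition src :: "nat \<Rightarrow> (nat \<Rightarrow>\<^sub>0 nat)" where "src r = fst (ERK_network ! r)"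
definition tgt :: "nat \<Rightarrow> (nat \<Rightarrow>\<^sub>0 nat)" where "tgt r = snd (ERK_network ! r)"
definition st :: "nat \<Rightarrow> nat \<Rightarrow> real" where
  "st r i = real (Poly_Mapping.lookup (tgt r) i) - real (Poly_Mapping.lookup (src r) i)"

lemma lookup_cplx: "Poly_Mapping.lookup (cplx l) i = count_list l i"
  by (induction l) (auto simp: cplx_def lookup_add lookup_single when_def)

lemma keys_cplx: "Poly_Mapping.keys (cplx l) = set l"
  by (auto simp: in_keys_iff lookup_cplx count_list_0_iff)

lemma cplx_nz: "cplx (a # l) \<noteq> 0"
proof
  assume "cplx (a # l) = 0"
  then have "Poly_Mapping.keys (cplx (a # l)) = {}" by simp
  then show False by (simp add: keys_cplx)
qed

lemma all30: "(\<forall>r<(30::nat). P r) = (\<forall>r\<in>set [0..<30]. P r)" by auto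

lemma len: "length ERK_network = 30" by (simp add: ERK_network_def)

lemma ma_eq: "mass_action ERK_network k i = (\<Sum>r<30. Poly_Mapping.single (src r) (k r * st r i))"
  by (simp add: mass_action_def len src_def tgt_def st_def)

definition F :: "(nat \<Rightarrow> real) \<Rightarrow> nat set \<Rightarrow> mpoly" where
  "F k S = (\<Sum>i\<in>S. mass_action ERK_network k i)"

lemma single_sum: "Poly_Mapping.single m (sum f A) = (\<Sum>x\<in>A. Poly_Mapping.single m (f x))"
  by (induction A rule: infinite_finite_induct) (auto simp: single_add)

lemma F_eq: "F k S = (\<Sum>r<30. Poly_Mapping.single (src r) (k r * (\<Sum>i\<in>S. st r i)))"
  unfolding F_def ma_eq
  by (subst sum.swap) (simp add: single_sum sum_distrib_left)

lemma keys_F: "Poly_Mapping.keys (F k S) \<subseteq> {src r | r. r < 30 \<and> (\<Sum>i\<in>S. st r i) \<noteq> 0}"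
proof
  fix m assume "m \<in> Poly_Mapping.keys (F k S)"
  then obtain r where "r < 30" "m \<in> Poly_Mapping.keys (Poly_Mapping.single (src r) (k r * (\<Sum>i\<in>S. st r i)))"
    using keys_sum[of "\<lambda>r. Poly_Mapping.single (src r) (k r * (\<Sum>i\<in>S. st r i))" "{..<30}"]
    unfolding F_eq by auto
  then show "m \<in> {src r | r. r < 30 \<and> (\<Sum>i\<in>S. st r i) \<noteq> 0}"
    by (auto split: if_splits)
qed

lemma binom_c:
  assumes "\<forall>r\<in>set [0..<30]. (\<Sum>i\<in>S. st r i) = 0 \<or> src r \<in> {a, b}"
  shows "binomial (F k S)"
proof -
  have "Poly_Mapping.keys (F k S) \<subseteq> {a,b}" using keys_F[of k S] assms by force
  then have "card (Poly_Mapping.keys (F k S)) \<le> card {a,b}" by (rule card_mono[rotated]) simp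
  also have "\<dots> \<le> 2" by (cases "a = b") auto
  finally show ?thesis unfolding binomial_def .
qed

lemma cons_c:
  assumes "\<forall>r\<in>set [0..<30]. (\<Sum>i\<in>S. st r i) = 0"
  shows "F k S = 0"
  unfolding F_eq using assms by simp

lemma src_ok: "\<forall>r<30. Poly_Mapping.keys (src r) \<subseteq> {..<21} \<and> src r \<noteq> 0"
  apply (simp only: all30)
  apply (simp add: src_def ERK_network_def upt_rec keys_cplx cplx_nz del: keys_eq_empty)
  done

lemma in_ring_F: "in_ring (F k S)"
  unfolding in_ring_def nspec_def using keys_F[of k S] src_ok by fastforce

lemma zero_F: "0 \<notin> Poly_Mapping.keys (F k S)"
  using keys_F[of k S] src_ok by fastforce

lemma in_ring_mult: "in_ring g \<Longrightarrow> in_ring h \<Longrightarrow> in_ring (g * h)"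
  unfolding in_ring_def
proof
  fix m assume g: "\<forall>m\<in>Poly_Mapping.keys g. Poly_Mapping.keys m \<subseteq> {..<nspec}"
    and h: "\<forall>m\<in>Poly_Mapping.keys h. Poly_Mapping.keys m \<subseteq> {..<nspec}"
    and m: "m \<in> Poly_Mapping.keys (g * h)"
  then obtain a b where "m = a + b" "a \<in> Poly_Mapping.keys g" "b \<in> Poly_Mapping.keys h"
    using keys_mult by blast
  then show "Poly_Mapping.keys m \<subseteq> {..<nspec}" using g h keys_add[of a b] by blast
qed

lemma in_ring_one: "in_ring 1" by (simp add: in_ring_def)
lemma in_ring_mone: "in_ring (-1)" by (simp add: in_ring_def)

lemma ideal_gen_zero: "0 \<in> ideal_gen B"
  unfolding ideal_gen_def by (rule CollectI, rule exI[of _ "[]"], rule exI[of _ "[]"]) simp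

lemma ideal_gen_gen: "f \<in> B \<Longrightarrow> f \<in> ideal_gen B"
  unfolding ideal_gen_def
  by (rule CollectI, rule exI[of _ "[f]"], rule exI[of _ "[1]"]) (simp add: in_ring_one)

lemma ideal_gen_add: "p \<in> ideal_gen B \<Longrightarrow> q \<in> ideal_gen B \<Longrightarrow> p + q \<in> ideal_gen B"
proof -
  assume "p \<in> ideal_gen B" "q \<in> ideal_gen B"
  then obtain fs gs fs' gs' where a: "set fs \<subseteq> B" "length gs = length fs" "\<forall>g\<in>set gs. in_ring g"
     "p = sum_list (map2 (*) gs fs)" and b: "set fs' \<subseteq> B" "length gs' = length fs'" "\<forall>g\<in>set gs'. in_ring g"
     "q = sum_list (map2 (*) gs' fs')"
    unfolding ideal_gen_def by blast
  show ?thesis unfolding ideal_gen_def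
    by (rule CollectI, rule exI[of _ "fs @ fs'"], rule exI[of _ "gs @ gs'"]) (use a b in auto)
qed

lemma mult_map2: "h * sum_list (map2 (*) gs fs) = sum_list (map2 (*) (map ((*) h) gs) fs)"
  for h :: mpoly
proof (induction gs arbitrary: fs)
  case Nil then show ?case by simp
next
  case (Cons g gs) then show ?case by (cases fs) (auto simp: distrib_left mult.assoc)
qed

lemma ideal_gen_mult: "in_ring h \<Longrightarrow> p \<in> ideal_gen B \<Longrightarrow> h * p \<in> ideal_gen B"
proof -
  assume h: "in_ring h" "p \<in> ideal_gen B"
  then obtain fs gs where a: "set fs \<subseteq> B" "length gs = length fs" "\<forall>g\<in>set gs. in_ring g"
     "p = sum_list (map2 (*) gs fs)"
    unfolding ideal_gen_def by blast
  show ?thesis unfolding ideal_gen_def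
    by (rule CollectI, rule exI[of _ "fs"], rule exI[of _ "map ((*) h) gs"])
       (use a h in \<open>auto simp: mult_map2 in_ring_mult\<close>)
qed

lemma ideal_gen_uminus: "p \<in> ideal_gen B \<Longrightarrow> - p \<in> ideal_gen B"
  using ideal_gen_mult[OF in_ring_mone, of p B] by simp

lemma ideal_gen_diff: "p \<in> ideal_gen B \<Longrightarrow> q \<in> ideal_gen B \<Longrightarrow> p - q \<in> ideal_gen B"
  using ideal_gen_add[of p B "-q"] ideal_gen_uminus[of q B] by simp

lemma ideal_gen_sum: "finite T \<Longrightarrow> (\<forall>i\<in>T. f i \<in> ideal_gen B) \<Longrightarrow> sum f T \<in> ideal_gen B"
  by (induction T rule: finite_induct) (auto intro: ideal_gen_zero ideal_gen_add)

lemma ideal_gen_mono_aux: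
  fixes fs :: "mpoly list"
  shows "\<forall>gs :: mpoly list. set fs \<subseteq> B \<longrightarrow> length gs = length fs \<longrightarrow> (\<forall>g\<in>set gs. in_ring g) \<longrightarrow> B \<subseteq> ideal_gen C
     \<longrightarrow> sum_list (map2 (*) gs fs) \<in> ideal_gen C"
proof (induction fs)
  case Nil then show ?case by (auto intro: ideal_gen_zero)
next
  case (Cons f fs)
  show ?case
  proof (intro allI impI)
    fix gs :: "mpoly list"
    assume a: "set (f # fs) \<subseteq> B" "length gs = length (f # fs)" "\<forall>g\<in>set gs. in_ring g" "B \<subseteq> ideal_gen C"
    then obtain g gs' where gs: "gs = g # gs'" "length gs' = length fs" by (cases gs) auto
    have 1: "g * f \<in> ideal_gen C" using a gs by (intro ideal_gen_mult) auto
    have 2: "sum_list (map2 (*) gs' fs) \<in> ideal_gen C" using Cons a gs by auto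
    show "sum_list (map2 (*) gs (f # fs)) \<in> ideal_gen C" using 1 2 gs by (simp add: ideal_gen_add)
  qed
qed

lemma ideal_gen_mono: "B \<subseteq> ideal_gen C \<Longrightarrow> ideal_gen B \<subseteq> ideal_gen C"
  using ideal_gen_mono_aux unfolding ideal_gen_def[of B] by blast

lemma zero_mult: "0 \<notin> Poly_Mapping.keys f \<Longrightarrow> 0 \<notin> Poly_Mapping.keys (g * f)"
  for f g :: mpoly
proof
  assume f: "0 \<notin> Poly_Mapping.keys f" and "0 \<in> Poly_Mapping.keys (g * f)"
  then obtain a b where ab: "0 = a + b" "b \<in> Poly_Mapping.keys f" using keys_mult by blast
  then have "b \<noteq> 0" using f by auto
  then obtain i where "Poly_Mapping.lookup b i \<noteq> 0" by (metis lookup_zero poly_mapping_eqI)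
  then have "Poly_Mapping.lookup (a + b) i \<noteq> 0" by (simp add: lookup_add)
  then show False using ab by simp
qed

lemma zero_ideal_aux:
  fixes fs :: "mpoly list"
  shows "\<forall>gs :: mpoly list. set fs \<subseteq> B \<longrightarrow> length gs = length fs \<longrightarrow> (\<forall>f\<in>B. 0 \<notin> Poly_Mapping.keys f)
     \<longrightarrow> 0 \<notin> Poly_Mapping.keys (sum_list (map2 (*) gs fs))"
proof (induction fs)
  case Nil then show ?case by auto
next
  case (Cons f fs)
  show ?case
  proof (intro allI impI)
    fix gs :: "mpoly list" assume a: "set (f # fs) \<subseteq> B" "length gs = length (f # fs)" "\<forall>f\<in>B. 0 \<notin> Poly_Mapping.keys f"
    then obtain g gs' where gs: "gs = g # gs'" "length gs' = length fs" by (cases gs) auto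
    have 1: "0 \<notin> Poly_Mapping.keys (g * f)" using a by (intro zero_mult) auto
    have 2: "0 \<notin> Poly_Mapping.keys (sum_list (map2 (*) gs' fs))" using Cons a gs by auto
    show "0 \<notin> Poly_Mapping.keys (sum_list (map2 (*) gs (f # fs)))"
      using 1 2 keys_add[of "g * f" "sum_list (map2 (*) gs' fs)"] gs by auto
  qed
qed

lemma zero_ideal: "\<forall>f\<in>B. 0 \<notin> Poly_Mapping.keys f \<Longrightarrow> p \<in> ideal_gen B \<Longrightarrow> 0 \<notin> Poly_Mapping.keys p"
  using zero_ideal_aux unfolding ideal_gen_def by blast

lemma eval_zero: "0 \<notin> Poly_Mapping.keys p \<Longrightarrow> eval p (\<lambda>_. 0) = 0"
  unfolding eval_def
proof (rule sum.neutral, rule ballI)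
  fix m assume "0 \<notin> Poly_Mapping.keys p" "m \<in> Poly_Mapping.keys p"
  then have "m \<noteq> 0" by auto
  then obtain i where i: "Poly_Mapping.lookup m i \<noteq> 0" by (metis lookup_zero poly_mapping_eqI)
  then have "i \<in> Poly_Mapping.keys m" by (simp add: in_keys_iff)
  then have "(\<Prod>i\<in>Poly_Mapping.keys m. (0::real) ^ Poly_Mapping.lookup m i) = 0"
    using i by (subst prod_zero_iff) auto
  then show "Poly_Mapping.lookup p m * (\<Prod>i\<in>Poly_Mapping.keys m. (0::real) ^ Poly_Mapping.lookup m i) = 0"
    by simp
qed


abbreviation M where "M k i \<equiv> mass_action ERK_network k i"
definition Bsets :: "nat set set" where "Bsets = {{11},{16},{12},{13},{17},{18},{14},{15},{19},{20},{0,11},{2,12},{4,14,15,17},{5,14},{7,19}}"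
lemma bin0: "binomial (F k {11})"
  by (rule binom_c[where a="cplx [0,8]" and b="cplx [11]"]) (simp add: src_def tgt_def st_def ERK_network_def upt_rec lookup_cplx)
lemma bin1: "binomial (F k {16})"
  by (rule binom_c[where a="cplx [1,9]" and b="cplx [16]"]) (simp add: src_def tgt_def st_def ERK_network_def upt_rec lookup_cplx)
lemma bin2: "binomial (F k {12})"
  by (rule binom_c[where a="cplx [2,1]" and b="cplx [12]"]) (simp add: src_def tgt_def st_def ERK_network_def upt_rec lookup_cplx)
lemma bin3: "binomial (F k {13})"
  by (rule binom_c[where a="cplx [3,1]" and b="cplx [13]"]) (simp add: src_def tgt_def st_def ERK_network_def upt_rec lookup_cplx)
lemma bin4: "binomial (F k {17})"
  by (rule binom_c[where a="cplx [4,10]" and b="cplx [17]"]) (simp add: src_def tgt_def st_def ERK_network_def upt_rec lookup_cplx)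
lemma bin5: "binomial (F k {18})"
  by (rule binom_c[where a="cplx [3,10]" and b="cplx [18]"]) (simp add: src_def tgt_def st_def ERK_network_def upt_rec lookup_cplx)
lemma bin6: "binomial (F k {14})"
  by (rule binom_c[where a="cplx [5,4]" and b="cplx [14]"]) (simp add: src_def tgt_def st_def ERK_network_def upt_rec lookup_cplx)
lemma bin7: "binomial (F k {15})"
  by (rule binom_c[where a="cplx [6,4]" and b="cplx [15]"]) (simp add: src_def tgt_def st_def ERK_network_def upt_rec lookup_cplx)
lemma bin8: "binomial (F k {19})"
  by (rule binom_c[where a="cplx [7,10]" and b="cplx [19]"]) (simp add: src_def tgt_def st_def ERK_network_def upt_rec lookup_cplx)
lemma bin9: "binomial (F k {20})"
  by (rule binom_c[where a="cplx [6,10]" and b="cplx [20]"]) (simp add: src_def tgt_def st_def ERK_network_def upt_rec lookup_cplx)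
lemma bin10: "binomial (F k {0,11})"
  by (rule binom_c[where a="cplx [11]" and b="cplx [16]"]) (simp add: src_def tgt_def st_def ERK_network_def upt_rec lookup_cplx)
lemma bin11: "binomial (F k {2,12})"
  by (rule binom_c[where a="cplx [12]" and b="cplx [18]"]) (simp add: src_def tgt_def st_def ERK_network_def upt_rec lookup_cplx)
lemma bin12: "binomial (F k {4,14,15,17})"
  by (rule binom_c[where a="cplx [13]" and b="cplx [17]"]) (simp add: src_def tgt_def st_def ERK_network_def upt_rec lookup_cplx)
lemma bin13: "binomial (F k {5,14})"
  by (rule binom_c[where a="cplx [14]" and b="cplx [20]"]) (simp add: src_def tgt_def st_def ERK_network_def upt_rec lookup_cplx)
lemma bin14: "binomial (F k {7,19})"
  by (rule binom_c[where a="cplx [15]" and b="cplx [19]"]) (simp add: src_def tgt_def st_def ERK_network_def upt_rec lookup_cplx)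
lemma B_ok: "T \<in> Bsets \<Longrightarrow> in_ring (F k T) \<and> binomial (F k T)"
  by (auto simp: Bsets_def in_ring_F bin0 bin1 bin2 bin3 bin4 bin5 bin6 bin7 bin8 bin9 bin10 bin11 bin12 bin13 bin14)
lemma memb: assumes "i < 21" shows "M k i \<in> ideal_gen (F k ` Bsets)"
proof -
  let ?I = "ideal_gen (F k ` Bsets)"
  have g: "\<And>T. T \<in> Bsets \<Longrightarrow> F k T \<in> ?I" by (rule ideal_gen_gen) auto
  have s: "\<And>j. j \<in> {11,12,13,14,15,16,17,18,19,20} \<Longrightarrow> M k j \<in> ?I"
  proof -
    fix j :: nat assume "j \<in> {11,12,13,14,15,16,17,18,19,20}"
    then have "{j} \<in> Bsets" by (auto simp: Bsets_def)
    then show "M k j \<in> ?I" using g[of "{j}"] by (simp add: F_def)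
  qed
  have g0: "M k 0 + M k 11 \<in> ?I" using g[of "{0,11}"] by (simp add: Bsets_def F_def)
  have g2: "M k 2 + M k 12 \<in> ?I" using g[of "{2,12}"] by (simp add: Bsets_def F_def)
  have g4: "M k 4 + M k 14 + M k 15 + M k 17 \<in> ?I" using g[of "{4,14,15,17}"] by (simp add: Bsets_def F_def add.assoc)
  have g5: "M k 5 + M k 14 \<in> ?I" using g[of "{5,14}"] by (simp add: Bsets_def F_def)
  have g7: "M k 7 + M k 19 \<in> ?I" using g[of "{7,19}"] by (simp add: Bsets_def F_def)
  have "F k {0,1,11,12,13,16} = 0" by (rule cons_c) (simp add: src_def tgt_def st_def ERK_network_def upt_rec lookup_cplx)
  then have c1: "(\<Sum>i\<in>{0,1,11,12,13,16}. M k i) = 0" by (simp only: F_def)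
  have "F k {2,3,4,12,13,14,15,17,18} = 0" by (rule cons_c) (simp add: src_def tgt_def st_def ERK_network_def upt_rec lookup_cplx)
  then have c3: "(\<Sum>i\<in>{2,3,4,12,13,14,15,17,18}. M k i) = 0" by (simp only: F_def)
  have "F k {5,6,7,14,15,19,20} = 0" by (rule cons_c) (simp add: src_def tgt_def st_def ERK_network_def upt_rec lookup_cplx)
  then have c6: "(\<Sum>i\<in>{5,6,7,14,15,19,20}. M k i) = 0" by (simp only: F_def)
  have "F k {8,11} = 0" by (rule cons_c) (simp add: src_def tgt_def st_def ERK_network_def upt_rec lookup_cplx)
  then have c8: "(\<Sum>i\<in>{8,11}. M k i) = 0" by (simp only: F_def)
  have "F k {9,16} = 0" by (rule cons_c) (simp add: src_def tgt_def st_def ERK_network_def upt_rec lookup_cplx)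
  then have c9: "(\<Sum>i\<in>{9,16}. M k i) = 0" by (simp only: F_def)
  have "F k {10,17,18,19,20} = 0" by (rule cons_c) (simp add: src_def tgt_def st_def ERK_network_def upt_rec lookup_cplx)
  then have c10: "(\<Sum>i\<in>{10,17,18,19,20}. M k i) = 0" by (simp only: F_def)
  have e0: "M k 0 = (M k 0 + M k 11) - M k 11" by (simp add: algebra_simps eq_neg_iff_add_eq_0)
  have m0: "M k 0 \<in> ?I" by (subst e0, intro g0 g2 g4 g5 g7 ideal_gen_uminus ideal_gen_diff ideal_gen_add s) auto
  have e1: "M k 1 = - ((M k 0 + M k 11) + M k 12 + M k 13 + M k 16)" using c1 by (simp add: algebra_simps eq_neg_iff_add_eq_0)
  have m1: "M k 1 \<in> ?I" by (subst e1, intro g0 g2 g4 g5 g7 ideal_gen_uminus ideal_gen_diff ideal_gen_add s) auto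
  have e2: "M k 2 = (M k 2 + M k 12) - M k 12" by (simp add: algebra_simps eq_neg_iff_add_eq_0)
  have m2: "M k 2 \<in> ?I" by (subst e2, intro g0 g2 g4 g5 g7 ideal_gen_uminus ideal_gen_diff ideal_gen_add s) auto
  have e3: "M k 3 = - ((M k 2 + M k 12) + (M k 4 + M k 14 + M k 15 + M k 17) + M k 13 + M k 18)" using c3 by (simp add: algebra_simps eq_neg_iff_add_eq_0)
  have m3: "M k 3 \<in> ?I" by (subst e3, intro g0 g2 g4 g5 g7 ideal_gen_uminus ideal_gen_diff ideal_gen_add s) auto
  have e4: "M k 4 = (M k 4 + M k 14 + M k 15 + M k 17) - M k 14 - M k 15 - M k 17" by (simp add: algebra_simps eq_neg_iff_add_eq_0)
  have m4: "M k 4 \<in> ?I" by (subst e4, intro g0 g2 g4 g5 g7 ideal_gen_uminus ideal_gen_diff ideal_gen_add s) auto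
  have e5: "M k 5 = (M k 5 + M k 14) - M k 14" by (simp add: algebra_simps eq_neg_iff_add_eq_0)
  have m5: "M k 5 \<in> ?I" by (subst e5, intro g0 g2 g4 g5 g7 ideal_gen_uminus ideal_gen_diff ideal_gen_add s) auto
  have e6: "M k 6 = - ((M k 5 + M k 14) + (M k 7 + M k 19) + M k 15 + M k 20)" using c6 by (simp add: algebra_simps eq_neg_iff_add_eq_0)
  have m6: "M k 6 \<in> ?I" by (subst e6, intro g0 g2 g4 g5 g7 ideal_gen_uminus ideal_gen_diff ideal_gen_add s) auto
  have e7: "M k 7 = (M k 7 + M k 19) - M k 19" by (simp add: algebra_simps eq_neg_iff_add_eq_0)
  have m7: "M k 7 \<in> ?I" by (subst e7, intro g0 g2 g4 g5 g7 ideal_gen_uminus ideal_gen_diff ideal_gen_add s) auto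
  have e8: "M k 8 = - M k 11" using c8 by (simp add: algebra_simps eq_neg_iff_add_eq_0)
  have m8: "M k 8 \<in> ?I" by (subst e8, intro g0 g2 g4 g5 g7 ideal_gen_uminus ideal_gen_diff ideal_gen_add s) auto
  have e9: "M k 9 = - M k 16" using c9 by (simp add: algebra_simps eq_neg_iff_add_eq_0)
  have m9: "M k 9 \<in> ?I" by (subst e9, intro g0 g2 g4 g5 g7 ideal_gen_uminus ideal_gen_diff ideal_gen_add s) auto
  have e10: "M k 10 = - (M k 17 + M k 18 + M k 19 + M k 20)" using c10 by (simp add: algebra_simps eq_neg_iff_add_eq_0)
  have m10: "M k 10 \<in> ?I" by (subst e10, intro g0 g2 g4 g5 g7 ideal_gen_uminus ideal_gen_diff ideal_gen_add s) auto
  have "i \<in> {0,1,2,3,4,5,6,7,8,9,10,11,12,13,14,15,16,17,18,19,20}"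
    using assms by (simp add: less_Suc_eq numeral_eq_Suc)
  then show ?thesis using m0 m1 m2 m3 m4 m5 m6 m7 m8 m9 m10 s by fastforce
qed

theorem mainTheorem3:
  fixes k :: "nat \<Rightarrow> real"
  assumes "\<forall>r < 30. 0 < k r"
  shows "has_toric_steady_states ERK_network k \<and>
         (\<exists>B. (\<forall>b \<in> B. in_ring b \<and> binomial b) \<and> ideal_gen B = steady_state_ideal ERK_network k)"
proof -
  let ?B = "F k ` Bsets"
  let ?G = "{mass_action ERK_network k i | i. i < nspec}"
  have Bok: "\<forall>b\<in>?B. in_ring b \<and> binomial b" using B_ok by blast
  have J: "steady_state_ideal ERK_network k = ideal_gen ?G" by (simp add: steady_state_ideal_def)
  have fin: "\<forall>T\<in>Bsets. finite T \<and> T \<subseteq> {..<21}" by (simp add: Bsets_def)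
  have sub1: "?B \<subseteq> ideal_gen ?G"
  proof
    fix b assume "b \<in> ?B"
    then obtain T where T: "T \<in> Bsets" "b = F k T" by blast
    show "b \<in> ideal_gen ?G" unfolding T(2) F_def
      using fin T(1) by (intro ideal_gen_sum) (auto intro!: ideal_gen_gen simp: nspec_def)
  qed
  have sub2: "?G \<subseteq> ideal_gen ?B" using memb by (auto simp: nspec_def)
  have eq: "ideal_gen ?B = steady_state_ideal ERK_network k"
    using ideal_gen_mono[OF sub1] ideal_gen_mono[OF sub2] J by blast
  have gz: "\<forall>f\<in>?G. 0 \<notin> Poly_Mapping.keys f"
  proof
    fix f assume "f \<in> ?G"
    then obtain i where "f = F k {i}" by (auto simp: F_def)
    then show "0 \<notin> Poly_Mapping.keys f" using zero_F by simp
  qed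
  have zero: "\<forall>p\<in>steady_state_ideal ERK_network k. eval p (\<lambda>_. 0) = 0"
    using J zero_ideal[OF gz] eval_zero by auto
  have ex: "\<exists>B. (\<forall>b \<in> B. in_ring b \<and> binomial b) \<and> ideal_gen B = steady_state_ideal ERK_network k"
    using Bok eq by blast
  have ex2: "\<exists>x. (\<forall>i < nspec. 0 \<le> x i) \<and> (\<forall>p \<in> steady_state_ideal ERK_network k. eval p x = 0)"
    by (rule exI[of _ "\<lambda>_. 0"]) (use zero in simp)
  show ?thesis unfolding has_toric_steady_states_def using ex ex2 by blast
qed

end
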